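(* Let $F\in\mathbb{Z}[x_0,\ldots,x_n]$ be a form. Then $\mathrm{o}(F)=n+1$ if and only if $\mathrm{o}(F_p)=n+1$ for all except finitely many primes $p$.
   Context: $F_p\in\mathbb{F}_p[x_0,\dots,x_n]$ denotes the reduction of $F$ modulo $p$. The order of a form over a field $K$ is the smallest integer $m$ such that the form is equivalent, via an invertible linear change of variables over $K$, to a form explicitly involving only $m$ variables; $\mathrm{o}(F)$ is the order over $\mathbb{Q}$ and $\mathrm{o}(F_p)$ the order over $\mathbb{F}_p$. *)

theory Defs
  imports Complex_Main "HOL-Library.Poly_Mapping" "HOL-Computational_Algebra.Primes"
begin

text \<open>Multivariate polynomials in the variables x_0, x_1, ... with coefficients in 'a,
  represented as finitely supported maps from monomials (exponent vectors) to coefficients.\<close>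
type_synonym 'a mpoly = "(nat \<Rightarrow>\<^sub>0 nat) \<Rightarrow>\<^sub>0 'a"

definition Var :: "nat \<Rightarrow> 'a::comm_semiring_1 mpoly" where
  "Var i = Poly_Mapping.single (Poly_Mapping.single i 1) 1"

definition Const :: "'a::comm_semiring_1 \<Rightarrow> 'a mpoly" where
  "Const c = Poly_Mapping.single 0 c"

definition vars :: "'a::zero mpoly \<Rightarrow> nat set" where
  "vars P = {i. \<exists>mo\<in>Poly_Mapping.keys P. i \<in> Poly_Mapping.keys mo}"

definition mdeg :: "(nat \<Rightarrow>\<^sub>0 nat) \<Rightarrow> nat" where
  "mdeg mo = (\<Sum>i\<in>Poly_Mapping.keys mo. Poly_Mapping.lookup mo i)"

definition is_form :: "'a::zero mpoly \<Rightarrow> bool" where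
  "is_form P \<longleftrightarrow> (\<exists>d. \<forall>mo\<in>Poly_Mapping.keys P. mdeg mo = d)"

definition subst :: "(nat \<Rightarrow> 'a::comm_semiring_1 mpoly) \<Rightarrow> 'a mpoly \<Rightarrow> 'a mpoly" where
  "subst \<sigma> P = (\<Sum>mo\<in>Poly_Mapping.keys P. Const (Poly_Mapping.lookup P mo) * (\<Prod>i\<in>Poly_Mapping.keys mo. \<sigma> i ^ Poly_Mapping.lookup mo i))"

definition lin_subst :: "nat \<Rightarrow> (nat \<Rightarrow> nat \<Rightarrow> 'a::comm_semiring_1) \<Rightarrow> 'a mpoly \<Rightarrow> 'a mpoly" where
  "lin_subst n A P = subst (\<lambda>i. if i \<le> n then (\<Sum>j\<le>n. Const (A i j) * Var j) else Var i) P"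

definition order_field :: "nat \<Rightarrow> 'a::field mpoly \<Rightarrow> nat" where
  "order_field n P = (LEAST m. \<exists>A B :: nat \<Rightarrow> nat \<Rightarrow> 'a.
      (\<forall>i\<le>n. \<forall>j\<le>n. (\<Sum>k\<le>n. A i k * B k j) = (if i = j then 1 else 0))
      \<and> card (vars (lin_subst n A P)) \<le> m)"

text \<open>Reduction modulo p (coefficients represented by their residues in {0..p-1}).\<close>
definition reduce :: "int \<Rightarrow> int mpoly \<Rightarrow> int mpoly" where
  "reduce p P = Poly_Mapping.map (\<lambda>c. c mod p) P"

text \<open>Order of the reduction F_p over F_p: F_p-arithmetic is modelled by integer arithmetic
  modulo p; a matrix over F_p is represented by an integer lift, invertible modulo p.\<close>
definition order_mod :: "int \<Rightarrow> nat \<Rightarrow> int mpoly \<Rightarrow> nat" where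
  "order_mod p n F = (LEAST m. \<exists>A B :: nat \<Rightarrow> nat \<Rightarrow> int.
      (\<forall>i\<le>n. \<forall>j\<le>n. (\<Sum>k\<le>n. A i k * B k j) mod p = (if i = j then 1 else 0) mod p)
      \<and> card (vars (reduce p (lin_subst n A F))) \<le> m)"

end

theory Submission
  imports Defs "Jordan_Normal_Form.Determinant"
begin

abbreviation lk :: "('a \<Rightarrow>\<^sub>0 'b::zero) \<Rightarrow> 'a \<Rightarrow> 'b" where "lk \<equiv> Poly_Mapping.lookup"
abbreviation ks :: "('a \<Rightarrow>\<^sub>0 'b::zero) \<Rightarrow> 'a set" where "ks \<equiv> Poly_Mapping.keys"
abbreviation sg :: "'a \<Rightarrow> 'b \<Rightarrow> ('a \<Rightarrow>\<^sub>0 'b::zero)" where "sg \<equiv> Poly_Mapping.single"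

lemma lookup_map0: "f 0 = 0 \<Longrightarrow> lk (Poly_Mapping.map f P) k = f (lk P k)"
  by (simp add: Poly_Mapping.map.rep_eq when_def)

lemma lookup_Const_mult: "lk (Const c * P) k = c * lk P k"
proof -
  have "Const c * P = Poly_Mapping.map ((*) c) P"
    by (simp add: Const_def mult_map_scale_conv_mult)
  then show ?thesis by (simp add: lookup_map0)
qed

lemma Const_add: "Const (a+b) = Const a + Const b" by (simp add: Const_def single_add)
lemma Const_mult: "Const (a*b) = Const a * Const b" by (simp add: Const_def mult_single)
lemma Const_0[simp]: "Const 0 = 0" by (simp add: Const_def)
lemma Const_1[simp]: "Const 1 = 1" by (simp add: Const_def)
lemma Const_diff: "Const (a-b) = Const a - (Const b :: 'a::comm_ring_1 mpoly)" by (simp add: Const_def single_diff)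
lemma Const_uminus: "Const (-a) = - (Const a :: 'a::comm_ring_1 mpoly)" by (simp add: Const_def single_uminus)
lemma Const_sum: "Const (sum f A) = (\<Sum>a\<in>A. Const (f a))"
  by (induct A rule: infinite_finite_induct) (auto simp: Const_add)
lemma Const_power: "Const (a ^ e) = Const a ^ e"
  by (induct e) (auto simp: Const_mult)
lemma lookup_Const: "lk (Const c) k = (if k = 0 then c else 0)"
  by (simp add: Const_def lookup_single when_def)

definition pmon :: "(nat \<Rightarrow> 'a::comm_semiring_1 mpoly) \<Rightarrow> (nat \<Rightarrow>\<^sub>0 nat) \<Rightarrow> 'a mpoly" where
  "pmon \<sigma> mo = (\<Prod>i\<in>ks mo. \<sigma> i ^ lk mo i)"

lemma subst_mon: "subst \<sigma> P = (\<Sum>mo\<in>ks P. Const (lk P mo) * pmon \<sigma> mo)"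
  by (simp add: subst_def pmon_def)

lemma pmon_superset: "finite S \<Longrightarrow> ks mo \<subseteq> S \<Longrightarrow> pmon \<sigma> mo = (\<Prod>i\<in>S. \<sigma> i ^ lk mo i)"
  unfolding pmon_def by (rule prod.mono_neutral_left) (auto simp: in_keys_iff)

lemma keys_add_nat: "ks (a + b) = ks a \<union> ks (b :: nat \<Rightarrow>\<^sub>0 nat)"
  by (auto simp: in_keys_iff lookup_add)

lemma pmon_add: "pmon \<sigma> (a + b) = pmon \<sigma> a * pmon \<sigma> b"
proof -
  let ?S = "ks a \<union> ks b"
  have "pmon \<sigma> (a + b) = (\<Prod>i\<in>?S. \<sigma> i ^ lk (a+b) i)"
    by (rule pmon_superset) (auto simp: keys_add_nat)
  also have "\<dots> = (\<Prod>i\<in>?S. \<sigma> i ^ lk a i * \<sigma> i ^ lk b i)"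
    by (simp add: lookup_add power_add)
  also have "\<dots> = (\<Prod>i\<in>?S. \<sigma> i ^ lk a i) * (\<Prod>i\<in>?S. \<sigma> i ^ lk b i)"
    by (rule prod.distrib)
  also have "\<dots> = pmon \<sigma> a * pmon \<sigma> b"
    by (subst (1 2) pmon_superset[of ?S]) auto
  finally show ?thesis .
qed

lemma pmon_zero[simp]: "pmon \<sigma> 0 = 1" by (simp add: pmon_def)

lemma subst_superset: "finite S \<Longrightarrow> ks P \<subseteq> S \<Longrightarrow> subst \<sigma> P = (\<Sum>mo\<in>S. Const (lk P mo) * pmon \<sigma> mo)"
  unfolding subst_mon by (rule sum.mono_neutral_left) (auto simp: in_keys_iff)

lemma subst_add: "subst \<sigma> (P + Q) = subst \<sigma> P + subst \<sigma> Q"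
proof -
  let ?S = "ks P \<union> ks Q"
  have "subst \<sigma> (P + Q) = (\<Sum>mo\<in>?S. Const (lk (P+Q) mo) * pmon \<sigma> mo)"
    by (rule subst_superset) (auto dest: set_mp[OF keys_add])
  also have "\<dots> = (\<Sum>mo\<in>?S. Const (lk P mo) * pmon \<sigma> mo + Const (lk Q mo) * pmon \<sigma> mo)"
    by (simp add: lookup_add Const_add distrib_right)
  also have "\<dots> = (\<Sum>mo\<in>?S. Const (lk P mo) * pmon \<sigma> mo) + (\<Sum>mo\<in>?S. Const (lk Q mo) * pmon \<sigma> mo)"
    by (rule sum.distrib)
  also have "\<dots> = subst \<sigma> P + subst \<sigma> Q"
    by (subst (1 2) subst_superset[of ?S]) auto
  finally show ?thesis .
qed

lemma subst_zero[simp]: "subst \<sigma> 0 = 0" by (simp add: subst_def)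

lemma subst_sum: "subst \<sigma> (sum f A) = (\<Sum>a\<in>A. subst \<sigma> (f a))"
  by (induct A rule: infinite_finite_induct) (auto simp: subst_add)

lemma subst_single: "subst \<sigma> (sg a c) = Const c * pmon \<sigma> a"
  by (cases "c = 0") (auto simp: subst_mon)

lemma poly_expand: "finite S \<Longrightarrow> ks P \<subseteq> S \<Longrightarrow> P = (\<Sum>a\<in>S. sg a (lk P a))"
  by (rule poly_mapping_eqI) (auto simp: lookup_sum lookup_single when_def in_keys_iff)

lemma mult_expand:
  assumes "finite S" "ks P \<subseteq> S" "finite T" "ks Q \<subseteq> T"
  shows "P * Q = (\<Sum>a\<in>S. \<Sum>b\<in>T. sg (a+b) (lk P a * lk Q b))"
proof -
  have "P * Q = (\<Sum>a\<in>S. sg a (lk P a)) * (\<Sum>b\<in>T. sg b (lk Q b))"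
    using poly_expand[OF assms(1,2)] poly_expand[OF assms(3,4)] by metis
  also have "\<dots> = (\<Sum>a\<in>S. \<Sum>b\<in>T. sg (a+b) (lk P a * lk Q b))"
    by (simp add: sum_product mult_single)
  finally show ?thesis .
qed

lemma subst_mult: "subst \<sigma> (P * Q) = subst \<sigma> P * subst \<sigma> Q"
proof -
  have "subst \<sigma> (P * Q) = (\<Sum>a\<in>ks P. \<Sum>b\<in>ks Q. Const (lk P a * lk Q b) * pmon \<sigma> (a + b))"
    by (subst mult_expand[of "ks P" P "ks Q" Q]) (auto simp: subst_sum subst_single)
  also have "\<dots> = (\<Sum>a\<in>ks P. \<Sum>b\<in>ks Q. (Const (lk P a) * pmon \<sigma> a) * (Const (lk Q b) * pmon \<sigma> b))"
    by (simp add: Const_mult pmon_add mult_ac)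
  also have "\<dots> = subst \<sigma> P * subst \<sigma> Q"
    by (simp add: subst_mon sum_product)
  finally show ?thesis .
qed

lemma subst_Const[simp]: "subst \<sigma> (Const c) = Const c"
  by (simp add: Const_def subst_single)

lemma subst_one[simp]: "subst \<sigma> 1 = 1"
  using subst_Const[of \<sigma> 1] by simp

lemma subst_Var[simp]: "subst \<sigma> (Var i) = \<sigma> i"
  by (simp add: Var_def subst_single pmon_def)

lemma subst_power: "subst \<sigma> (P ^ e) = subst \<sigma> P ^ e"
  by (induct e) (auto simp: subst_mult)

lemma subst_prod: "subst \<sigma> (prod f A) = (\<Prod>a\<in>A. subst \<sigma> (f a))"
  by (induct A rule: infinite_finite_induct) (auto simp: subst_mult)

lemma subst_uminus: "subst \<sigma> (- P) = - subst \<sigma> (P :: 'a::comm_ring_1 mpoly)"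
proof -
  have "subst \<sigma> (- P) + subst \<sigma> P = 0" by (simp flip: subst_add)
  then show ?thesis by (simp add: eq_neg_iff_add_eq_0)
qed

lemma subst_diff: "subst \<sigma> (P - Q) = subst \<sigma> P - subst \<sigma> (Q :: 'a::comm_ring_1 mpoly)"
  using subst_add[of \<sigma> P "-Q"] by (simp add: subst_uminus)

lemma Var_power: "Var i ^ e = (sg (sg i e) 1 :: 'a::comm_semiring_1 mpoly)"
proof (induct e)
  case 0 then show ?case by simp
next
  case (Suc e)
  have "Var i ^ Suc e = Var i * (sg (sg i e) 1 :: 'a mpoly)"
    by (simp only: power_Suc Suc)
  also have "\<dots> = sg (sg i 1 + sg i e) 1"
    by (simp add: Var_def mult_single)
  also have "sg i 1 + sg i e = sg i (Suc e)" by (simp flip: single_add)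
  finally show ?case .
qed

lemma prod_single_one: "(\<Prod>i\<in>A. sg (f i) (1::'a::comm_semiring_1)) = sg (sum f A) 1"
  by (induct A rule: infinite_finite_induct) (auto simp: mult_single)

lemma pmon_Var: "pmon Var mo = (sg mo 1 :: 'a::comm_semiring_1 mpoly)"
proof -
  have "pmon Var mo = (\<Prod>i\<in>ks mo. (sg (sg i (lk mo i)) 1 :: 'a mpoly))"
    by (simp add: pmon_def Var_power)
  also have "\<dots> = sg (\<Sum>i\<in>ks mo. sg i (lk mo i)) 1" by (rule prod_single_one)
  also have "(\<Sum>i\<in>ks mo. sg i (lk mo i)) = mo" by (rule poly_expand[symmetric]) auto
  finally show ?thesis .
qed

lemma subst_Var_id: "subst Var P = P"
proof -
  have "subst Var P = (\<Sum>mo\<in>ks P. sg mo (lk P mo))"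
    by (simp add: subst_mon pmon_Var Const_def mult_single)
  also have "\<dots> = P" by (rule poly_expand[symmetric]) auto
  finally show ?thesis .
qed

lemma mpoly_induct:
  assumes V: "vars P \<subseteq> V"
    and C: "\<And>c. Q (Const c)" and X: "\<And>i. i \<in> V \<Longrightarrow> Q (Var i)"
    and A: "\<And>P1 P2. Q P1 \<Longrightarrow> Q P2 \<Longrightarrow> Q (P1 + P2)"
    and M: "\<And>P1 P2. Q P1 \<Longrightarrow> Q P2 \<Longrightarrow> Q (P1 * P2)"
  shows "Q P"
proof -
  have Q0: "Q 0" using C[of 0] by simp
  have Q1: "Q 1" using C[of 1] by simp
  have sumQ: "finite B \<Longrightarrow> (\<forall>a\<in>B. Q (f a)) \<Longrightarrow> Q (sum f B)" for B and f :: "'c \<Rightarrow> 'a mpoly"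
    by (induct B rule: finite_induct) (auto intro: A Q0)
  have prodQ: "finite B \<Longrightarrow> (\<forall>a\<in>B. Q (f a)) \<Longrightarrow> Q (prod f B)" for B and f :: "'c \<Rightarrow> 'a mpoly"
    by (induct B rule: finite_induct) (auto intro: M Q1)
  have powQ: "Q X \<Longrightarrow> Q (X ^ e)" for X e
    by (induct e) (auto intro: M Q1)
  have "P = (\<Sum>mo\<in>ks P. Const (lk P mo) * (\<Prod>i\<in>ks mo. Var i ^ lk mo i))"
    using subst_Var_id[of P] by (simp add: subst_def)
  also have "Q \<dots>"
  proof (rule sumQ, simp, intro ballI M C prodQ, simp, intro ballI powQ X)
    fix mo i assume "mo \<in> ks P" "i \<in> ks mo"
    then show "i \<in> V" using V by (auto simp: vars_def)
  qed
  finally show ?thesis .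
qed

lemma subst_cong: "(\<And>i. i \<in> vars P \<Longrightarrow> \<sigma> i = \<tau> i) \<Longrightarrow> subst \<sigma> P = subst \<tau> P"
proof -
  assume as: "\<And>i. i \<in> vars P \<Longrightarrow> \<sigma> i = \<tau> i"
  have "(\<Prod>i\<in>ks mo. \<sigma> i ^ lk mo i) = (\<Prod>i\<in>ks mo. \<tau> i ^ lk mo i)" if "mo \<in> ks P" for mo
  proof (intro prod.cong refl)
    fix i assume "i \<in> ks mo"
    then have "i \<in> vars P" using that by (auto simp: vars_def)
    then show "\<sigma> i ^ lk mo i = \<tau> i ^ lk mo i" using as by simp
  qed
  then show ?thesis unfolding subst_def by (intro sum.cong refl) simp
qed

lemma subst_subst: "subst \<tau> (subst \<sigma> P) = subst (\<lambda>i. subst \<tau> (\<sigma> i)) P"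
proof -
  have "subst \<tau> (subst \<sigma> P) = (\<Sum>mo\<in>ks P. Const (lk P mo) * (\<Prod>i\<in>ks mo. subst \<tau> (\<sigma> i) ^ lk mo i))"
    by (simp only: subst_def[of \<sigma> P] subst_sum subst_mult subst_Const subst_prod subst_power)
  then show ?thesis by (simp only: subst_def[of "\<lambda>i. subst \<tau> (\<sigma> i)" P])
qed

lemma vars_add: "vars (P + Q) \<subseteq> vars P \<union> vars (Q :: 'a::comm_monoid_add mpoly)"
proof
  fix i assume "i \<in> vars (P+Q)"
  then obtain mo where mo: "mo \<in> ks (P+Q)" "i \<in> ks mo" unfolding vars_def by blast
  from mo(1) have "mo \<in> ks P \<union> ks Q" using keys_add[of P Q] by (rule subsetD[rotated])
  then show "i \<in> vars P \<union> vars Q" using mo(2) unfolding vars_def by blast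
qed

lemma vars_mult: "vars (P * Q) \<subseteq> vars P \<union> vars (Q :: 'a::comm_semiring_1 mpoly)"
proof
  fix i assume "i \<in> vars (P*Q)"
  then obtain mo where mo: "mo \<in> ks (P*Q)" "i \<in> ks mo" unfolding vars_def by blast
  from mo(1) have "mo \<in> {a + b | a b. a \<in> ks P \<and> b \<in> ks Q}" using keys_mult[of P Q] by (rule subsetD[rotated])
  then obtain a b where ab: "a \<in> ks P" "b \<in> ks Q" "mo = a + b" by blast
  then have "i \<in> ks a \<or> i \<in> ks b" using mo(2) by (simp add: keys_add_nat)
  then show "i \<in> vars P \<union> vars Q" using ab unfolding vars_def by blast
qed

lemma vars_Const[simp]: "vars (Const (c::'a::comm_semiring_1)) = {}"
  by (simp add: vars_def Const_def)

lemma vars_zero[simp]: "vars (0 :: 'a::zero mpoly) = {}" by (simp add: vars_def)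
lemma vars_one[simp]: "vars (1 :: 'a::comm_semiring_1 mpoly) = {}"
  using vars_Const[of "1::'a"] by simp

lemma vars_Var: "vars (Var i :: 'a::comm_semiring_1 mpoly) \<subseteq> {i}"
  by (simp add: vars_def Var_def)

lemma vars_sum: "vars (sum f A) \<subseteq> (\<Union>a\<in>A. vars (f a :: 'a::comm_monoid_add mpoly))"
proof (induct A rule: infinite_finite_induct)
  case (insert x F) then show ?case using vars_add[of "f x" "sum f F"] by auto
qed auto

lemma vars_prod: "vars (prod f A) \<subseteq> (\<Union>a\<in>A. vars (f a :: 'a::comm_semiring_1 mpoly))"
proof (induct A rule: infinite_finite_induct)
  case (insert x F) then show ?case using vars_mult[of "f x" "prod f F"] by auto
qed auto

lemma vars_power: "vars (P ^ e) \<subseteq> vars (P :: 'a::comm_semiring_1 mpoly)"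
proof (induct e)
  case (Suc e) then show ?case using vars_mult[of P "P ^ e"] by auto
qed auto

lemma vars_Const_mult: "vars (Const c * P) \<subseteq> vars (P :: 'a::comm_semiring_1 mpoly)"
  using vars_mult[of "Const c" P] by simp

lemma vars_subst: "vars (subst \<sigma> P) \<subseteq> (\<Union>i\<in>vars P. vars (\<sigma> i :: 'a::comm_semiring_1 mpoly))"
proof
  fix x assume "x \<in> vars (subst \<sigma> P)"
  then obtain mo where mo: "mo \<in> ks P" "x \<in> vars (Const (lk P mo) * (\<Prod>i\<in>ks mo. \<sigma> i ^ lk mo i))"
    unfolding subst_def using vars_sum by blast
  then have "x \<in> vars (\<Prod>i\<in>ks mo. \<sigma> i ^ lk mo i)" using vars_Const_mult by blast
  then obtain i where i: "i \<in> ks mo" "x \<in> vars (\<sigma> i ^ lk mo i)" using vars_prod by blast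
  then have "x \<in> vars (\<sigma> i)" using vars_power by blast
  moreover have "i \<in> vars P" using mo(1) i(1) by (auto simp: vars_def)
  ultimately show "x \<in> (\<Union>i\<in>vars P. vars (\<sigma> i))" by blast
qed

abbreviation mapq :: "int mpoly \<Rightarrow> rat mpoly" where "mapq \<equiv> Poly_Mapping.map of_int"

lemma lookup_mapq: "lk (mapq P) k = of_int (lk P k)"
  by (simp add: lookup_map0)

lemma keys_mapq: "ks (mapq P) = ks P"
  by (auto simp: in_keys_iff lookup_mapq)

lemma vars_mapq: "vars (mapq P) = vars P"
  by (simp add: vars_def keys_mapq)

lemma mapq_add: "mapq (P + Q) = mapq P + mapq Q"
  by (rule poly_mapping_eqI) (simp add: lookup_mapq lookup_add)

lemma mapq_zero[simp]: "mapq 0 = 0"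
  by (rule poly_mapping_eqI) (simp add: lookup_mapq)

lemma mapq_sum: "mapq (sum f A) = (\<Sum>a\<in>A. mapq (f a))"
  by (induct A rule: infinite_finite_induct) (auto simp: mapq_add)

lemma mapq_single: "mapq (sg a c) = sg a (of_int c)"
  by (rule poly_mapping_eqI) (simp add: lookup_mapq lookup_single when_def)

lemma mapq_mult: "mapq (P * Q) = mapq P * mapq Q"
proof -
  have "mapq (P * Q) = mapq (\<Sum>a\<in>ks P. \<Sum>b\<in>ks Q. sg (a+b) (lk P a * lk Q b))"
    by (subst mult_expand[of "ks P" P "ks Q" Q]) auto
  also have "\<dots> = (\<Sum>a\<in>ks P. \<Sum>b\<in>ks Q. sg (a+b) (lk (mapq P) a * lk (mapq Q) b))"
    by (simp add: mapq_sum mapq_single lookup_mapq)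
  also have "\<dots> = mapq P * mapq Q"
    by (rule mult_expand[symmetric]) (auto simp: keys_mapq)
  finally show ?thesis .
qed

lemma mapq_Const: "mapq (Const c) = Const (of_int c)"
  by (simp add: Const_def mapq_single)

lemma mapq_Var: "mapq (Var i) = Var i"
  by (simp add: Var_def mapq_single)

lemma mapq_power: "mapq (P ^ e) = mapq P ^ e"
  by (induct e) (auto simp: mapq_mult Const_def mapq_single simp flip: single_one)

lemma mapq_prod: "mapq (prod f A) = (\<Prod>a\<in>A. mapq (f a))"
  by (induct A rule: infinite_finite_induct) (auto simp: mapq_mult Const_def mapq_single simp flip: single_one)

lemma mapq_subst: "mapq (subst \<sigma> P) = subst (\<lambda>i. mapq (\<sigma> i)) (mapq P)"
  by (simp add: subst_def mapq_sum mapq_mult mapq_Const mapq_prod mapq_power keys_mapq lookup_mapq)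

subsection \<open>Partial derivatives\<close>

definition pd :: "nat \<Rightarrow> 'a::comm_semiring_1 mpoly \<Rightarrow> 'a mpoly" where
  "pd i P = Abs_poly_mapping (\<lambda>mo. of_nat (lk mo i + 1) * lk P (mo + sg i 1))"

lemma pd_finite: "finite {mo. of_nat (lk mo i + 1) * lk P (mo + sg i 1) \<noteq> (0::'a::comm_semiring_1)}"
proof -
  have "{mo. of_nat (lk mo i + 1) * lk P (mo + sg i 1) \<noteq> (0::'a)} \<subseteq> (\<lambda>m. m - sg i 1) ` ks P"
  proof
    fix mo assume "mo \<in> {mo. of_nat (lk mo i + 1) * lk P (mo + sg i 1) \<noteq> (0::'a)}"
    then have "mo + sg i 1 \<in> ks P" by (auto simp: in_keys_iff)
    moreover have "mo = (mo + sg i 1) - sg i 1" by simp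
    ultimately show "mo \<in> (\<lambda>m. m - sg i 1) ` ks P" by (rule rev_image_eqI)
  qed
  then show ?thesis by (rule finite_subset) simp
qed

lemma lookup_pd: "lk (pd i P) mo = of_nat (lk mo i + 1) * lk P (mo + sg i 1)"
  unfolding pd_def using pd_finite[of i P] by simp

lemma pd_add: "pd i (P + Q) = pd i P + pd i Q"
  by (rule poly_mapping_eqI) (simp add: lookup_pd lookup_add distrib_left)

lemma pd_zero[simp]: "pd i 0 = 0"
  by (rule poly_mapping_eqI) (simp add: lookup_pd)

lemma pd_sum: "pd i (sum f A) = (\<Sum>a\<in>A. pd i (f a))"
  by (induct A rule: infinite_finite_induct) (auto simp: pd_add)

lemma sub_add_single: "lk a i \<ge> 1 \<Longrightarrow> a - sg i 1 + sg i 1 = (a :: nat \<Rightarrow>\<^sub>0 nat)"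
  by (rule poly_mapping_eqI) (auto simp: lookup_add lookup_minus lookup_single when_def)

lemma pd_single: "pd i (sg a c) = sg (a - sg i 1) (of_nat (lk a i) * c)"
proof (rule poly_mapping_eqI)
  fix mo
  show "lk (pd i (sg a c)) mo = lk (sg (a - sg i 1) (of_nat (lk a i) * c)) mo"
  proof (cases "a = mo + sg i 1")
    case True
    then show ?thesis by (simp add: lookup_pd lookup_add lookup_single)
  next
    case False
    have "lk (sg (a - sg i 1) (of_nat (lk a i) * c)) mo = 0"
    proof (cases "lk a i \<ge> 1")
      case True
      then have "a - sg i 1 \<noteq> mo" using False sub_add_single[OF True] by metis
      then show ?thesis by (simp add: lookup_single)
    next
      case False
      then have "lk a i = 0" by simp
      then show ?thesis by (simp add: lookup_single when_def)
    qed
    then show ?thesis using False by (simp add: lookup_pd lookup_single when_def)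
  qed
qed

lemma pd_Const[simp]: "pd i (Const c) = 0"
  by (simp add: Const_def pd_single)

lemma pd_one[simp]: "pd i 1 = 0"
  using pd_Const[of i 1] by simp

lemma pd_Var: "pd i (Var j) = (if i = j then 1 else 0)"
  by (auto simp: Var_def pd_single lookup_single)

lemma shift_L: "sg (a - sg i 1 + b) (of_nat (lk a i) * x) = sg (a + b - sg i 1) (of_nat (lk a i) * (x::'a::comm_semiring_1))"
proof (cases "lk a i = 0")
  case False
  then have "a - sg i 1 + b = a + b - sg i 1"
    by (intro poly_mapping_eqI) (auto simp: lookup_add lookup_minus lookup_single when_def)
  then show ?thesis by simp
qed simp

lemma shift_R: "sg (a + (b - sg i 1)) (of_nat (lk b i) * x) = sg (a + b - sg i 1) (of_nat (lk b i) * (x::'a::comm_semiring_1))"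
proof (cases "lk b i = 0")
  case False
  then have "a + (b - sg i 1) = a + b - sg i 1"
    by (intro poly_mapping_eqI) (auto simp: lookup_add lookup_minus lookup_single when_def)
  then show ?thesis by simp
qed simp

lemma pd_mult_single: "pd i (sg a c * sg b d) = pd i (sg a c) * sg b d + sg a c * pd i (sg b (d::'a::comm_semiring_1))"
proof -
  have "pd i (sg a c) * sg b d + sg a c * pd i (sg b d)
      = sg (a - sg i 1 + b) (of_nat (lk a i) * (c * d)) + sg (a + (b - sg i 1)) (of_nat (lk b i) * (c * d))"
    by (simp add: pd_single mult_single ac_simps)
  also have "\<dots> = sg (a + b - sg i 1) (of_nat (lk a i) * (c * d)) + sg (a + b - sg i 1) (of_nat (lk b i) * (c * d))"
    by (simp only: shift_L shift_R)
  also have "\<dots> = pd i (sg a c * sg b d)"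
    by (simp add: pd_single mult_single lookup_add distrib_right flip: single_add)
  finally show ?thesis by simp
qed

lemma pd_mult_sums:
  assumes "\<And>a b. a \<in> A \<Longrightarrow> b \<in> B \<Longrightarrow> pd i (f a * g b) = pd i (f a) * g b + f a * pd i (g b)"
  shows "pd i (sum f A * sum g B) = pd i (sum f A) * sum g B + sum f A * pd i (sum g B)"
proof -
  have "pd i (sum f A * sum g B) = (\<Sum>a\<in>A. \<Sum>b\<in>B. pd i (f a * g b))"
    by (simp add: sum_product pd_sum)
  also have "\<dots> = (\<Sum>a\<in>A. \<Sum>b\<in>B. pd i (f a) * g b + f a * pd i (g b))"
    using assms by (intro sum.cong refl) auto
  also have "\<dots> = (\<Sum>a\<in>A. \<Sum>b\<in>B. pd i (f a) * g b) + (\<Sum>a\<in>A. \<Sum>b\<in>B. f a * pd i (g b))"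
    by (simp add: sum.distrib)
  also have "\<dots> = pd i (sum f A) * sum g B + sum f A * pd i (sum g B)"
    by (simp add: sum_product pd_sum)
  finally show ?thesis .
qed

lemma pd_mult: "pd i (P * Q) = pd i P * Q + P * pd i (Q :: 'a::comm_semiring_1 mpoly)"
proof -
  have P: "P = (\<Sum>a\<in>ks P. sg a (lk P a))" by (rule poly_expand) auto
  have Q: "Q = (\<Sum>a\<in>ks Q. sg a (lk Q a))" by (rule poly_expand) auto
  have "pd i ((\<Sum>a\<in>ks P. sg a (lk P a)) * (\<Sum>a\<in>ks Q. sg a (lk Q a)))
    = pd i (\<Sum>a\<in>ks P. sg a (lk P a)) * (\<Sum>a\<in>ks Q. sg a (lk Q a)) + (\<Sum>a\<in>ks P. sg a (lk P a)) * pd i (\<Sum>a\<in>ks Q. sg a (lk Q a))"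
    by (rule pd_mult_sums) (rule pd_mult_single)
  then show ?thesis using P Q by simp
qed

lemma pd_Const_mult: "pd i (Const c * P) = Const c * pd i P"
  by (simp add: pd_mult)

lemma pd_uminus: "pd i (- P) = - pd i (P :: 'a::comm_ring_1 mpoly)"
  by (rule poly_mapping_eqI) (simp add: lookup_pd)

lemma pd_diff: "pd i (P - Q) = pd i P - pd i (Q :: 'a::comm_ring_1 mpoly)"
  by (rule poly_mapping_eqI) (simp add: lookup_pd lookup_minus right_diff_distrib)

lemma chain_rule:
  assumes V: "finite V" "vars P \<subseteq> V"
  shows "pd k (subst \<sigma> P) = (\<Sum>i\<in>V. subst \<sigma> (pd i P) * pd k (\<sigma> i))"
proof (rule mpoly_induct[OF V(2)])
  fix c show "pd k (subst \<sigma> (Const c)) = (\<Sum>i\<in>V. subst \<sigma> (pd i (Const c)) * pd k (\<sigma> i))"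
    by simp
next
  fix j assume j: "j \<in> V"
  have "\<And>i. subst \<sigma> (pd i (Var j)) * pd k (\<sigma> i) = (if i = j then pd k (\<sigma> j) else 0)"
    by (simp add: pd_Var)
  then show "pd k (subst \<sigma> (Var j)) = (\<Sum>i\<in>V. subst \<sigma> (pd i (Var j)) * pd k (\<sigma> i))"
    using j V(1) by simp
next
  fix P1 P2
  assume h1: "pd k (subst \<sigma> P1) = (\<Sum>i\<in>V. subst \<sigma> (pd i P1) * pd k (\<sigma> i))"
    and h2: "pd k (subst \<sigma> P2) = (\<Sum>i\<in>V. subst \<sigma> (pd i P2) * pd k (\<sigma> i))"
  show "pd k (subst \<sigma> (P1 + P2)) = (\<Sum>i\<in>V. subst \<sigma> (pd i (P1 + P2)) * pd k (\<sigma> i))"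
    by (simp add: subst_add pd_add h1 h2 distrib_right sum.distrib)
  have "(\<Sum>i\<in>V. subst \<sigma> (pd i (P1 * P2)) * pd k (\<sigma> i))
     = (\<Sum>i\<in>V. (subst \<sigma> (pd i P1) * pd k (\<sigma> i)) * subst \<sigma> P2 + subst \<sigma> P1 * (subst \<sigma> (pd i P2) * pd k (\<sigma> i)))"
    by (intro sum.cong refl) (simp add: pd_mult subst_add subst_mult algebra_simps)
  also have "\<dots> = pd k (subst \<sigma> (P1 * P2))"
    by (simp add: sum.distrib h1 h2 subst_mult pd_mult sum_distrib_left sum_distrib_right)
  finally show "pd k (subst \<sigma> (P1 * P2)) = (\<Sum>i\<in>V. subst \<sigma> (pd i (P1 * P2)) * pd k (\<sigma> i))" ..
qed

lemma pd_zero_not_var: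
  fixes H :: "rat mpoly"
  assumes "pd j H = 0"
  shows "j \<notin> vars H"
proof
  assume "j \<in> vars H"
  then obtain mo where mo: "mo \<in> ks H" "j \<in> ks mo" unfolding vars_def by blast
  then have ge: "lk mo j \<ge> 1" by (simp add: in_keys_iff)
  have e: "mo - sg j 1 + sg j 1 = mo" by (rule sub_add_single[OF ge])
  have "lk (pd j H) (mo - sg j 1) = of_nat (lk (mo - sg j 1) j + 1) * lk H mo"
    by (simp only: lookup_pd e)
  also have "lk (mo - sg j 1) j + 1 = lk mo j" using ge by (simp add: lookup_minus)
  finally have "lk (pd j H) (mo - sg j 1) \<noteq> 0" using ge mo(1) by (simp add: in_keys_iff)
  then show False using assms by simp
qed

lemma sum_delta_mult: "finite A \<Longrightarrow> i \<in> A \<Longrightarrow> (\<Sum>k\<in>A. (if i = k then 1 else 0) * f k) = (f i :: 'a::semiring_1)"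
proof -
  assume "finite A" "i \<in> A"
  have "(\<Sum>k\<in>A. (if i = k then 1 else 0) * f k) = (\<Sum>k\<in>A. if k = i then f k else 0)"
    by (rule sum.cong) auto
  then show ?thesis using \<open>finite A\<close> \<open>i \<in> A\<close> by simp
qed

lemma sum_delta_mult': "finite A \<Longrightarrow> j \<in> A \<Longrightarrow> (\<Sum>k\<in>A. f k * (if k = j then 1 else 0)) = (f j :: 'a::semiring_1)"
proof -
  assume "finite A" "j \<in> A"
  have "(\<Sum>k\<in>A. f k * (if k = j then 1 else 0)) = (\<Sum>k\<in>A. if k = j then f k else 0)"
    by (rule sum.cong) auto
  then show ?thesis using \<open>finite A\<close> \<open>j \<in> A\<close> by simp
qed

lemma id_mult: "i \<le> (n::nat) \<Longrightarrow> (\<Sum>k\<le>n. (if i = k then 1 else 0) * (if k = j then 1 else 0 :: 'a::semiring_1)) = (if i = j then 1 else 0)"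
  by (rule sum_delta_mult) auto

definition sig :: "nat \<Rightarrow> (nat \<Rightarrow> nat \<Rightarrow> 'a::comm_semiring_1) \<Rightarrow> nat \<Rightarrow> 'a mpoly" where
  "sig n A i = (if i \<le> n then (\<Sum>j\<le>n. Const (A i j) * Var j) else Var i)"

lemma lin_subst_sig: "lin_subst n A P = subst (sig n A) P"
  unfolding lin_subst_def sig_def[abs_def] ..

lemma vars_sig: "vars (sig n A i) \<subseteq> (if i \<le> n then {..n} else {i})"
proof (cases "i \<le> n")
  case True
  have "vars (\<Sum>j\<le>n. Const (A i j) * Var j) \<subseteq> (\<Union>j\<in>{..n}. vars (Const (A i j) * Var j))"
    by (rule vars_sum)
  also have "\<dots> \<subseteq> (\<Union>j\<in>{..n}. {j})"
    using vars_Const_mult vars_Var by (intro UN_mono order_refl) (blast intro: order_trans)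
  finally show ?thesis using True by (auto simp: sig_def)
next
  case False then show ?thesis using vars_Var[of i] by (simp add: sig_def)
qed

lemma vars_lin_subst: "vars P \<subseteq> {..n} \<Longrightarrow> vars (lin_subst n A P) \<subseteq> {..n}"
proof -
  assume P: "vars P \<subseteq> {..n}"
  have "vars (lin_subst n A P) \<subseteq> (\<Union>i\<in>vars P. vars (sig n A i))"
    unfolding lin_subst_sig by (rule vars_subst)
  also have "\<dots> \<subseteq> {..n}"
  proof (rule UN_least)
    fix i assume "i \<in> vars P"
    then have "i \<le> n" using P by auto
    then show "vars (sig n A i) \<subseteq> {..n}" using vars_sig[of n A i] by simp
  qed
  finally show ?thesis .
qed

lemma keys_reduce: "ks (reduce p P) \<subseteq> ks P"
  by (auto simp: reduce_def in_keys_iff lookup_map0)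

lemma vars_reduce: "vars (reduce p P) \<subseteq> vars P"
  unfolding vars_def using keys_reduce[of p P] by blast

lemma lookup_reduce: "lk (reduce p P) k = lk P k mod p"
  by (simp add: reduce_def lookup_map0)

lemma card_le_Suc: "X \<subseteq> {..n} \<Longrightarrow> card X \<le> Suc n"
  using card_mono[of "{..n}" X] by simp

lemma missing_index: "X \<subseteq> {..n} \<Longrightarrow> card X \<le> n \<Longrightarrow> \<exists>k\<le>n. k \<notin> X"
proof (rule ccontr)
  assume "X \<subseteq> {..n}" "card X \<le> n" "\<not> (\<exists>k\<le>n. k \<notin> X)"
  then have "X = {..n}" by auto
  then show False using \<open>card X \<le> n\<close> by simp
qed

lemma order_field_le: "vars P \<subseteq> {..n} \<Longrightarrow> order_field n (P :: 'a::field mpoly) \<le> Suc n"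
  unfolding order_field_def
proof (rule Least_le, intro exI conjI allI impI)
  fix i j assume "i \<le> n" "j \<le> n"
  then show "(\<Sum>k\<le>n. (if i = k then 1 else 0) * (if k = j then 1 else 0)) = (if i = j then 1 else (0::'a))"
    by (simp only: id_mult)
next
  assume "vars P \<subseteq> {..n}"
  then show "card (vars (lin_subst n (\<lambda>i j. if i = j then 1 else 0) P)) \<le> Suc n"
    by (intro card_le_Suc vars_lin_subst)
qed

lemma order_mod_le: "vars P \<subseteq> {..n} \<Longrightarrow> order_mod p n P \<le> Suc n"
  unfolding order_mod_def
proof (rule Least_le, intro exI conjI allI impI)
  fix i j assume "i \<le> n" "j \<le> n"
  then show "(\<Sum>k\<le>n. (if i = k then 1 else 0) * (if k = j then 1 else 0)) mod p = (if i = j then 1 else 0) mod p"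
    by (simp only: id_mult)
next
  assume "vars P \<subseteq> {..n}"
  then show "card (vars (reduce p (lin_subst n (\<lambda>i j. if i = j then 1 else 0) P))) \<le> Suc n"
    by (intro card_le_Suc order_trans[OF vars_reduce] vars_lin_subst)
qed

lemma sig_id: "i \<le> n \<Longrightarrow> sig n (\<lambda>i j. if i = j then 1 else 0) i = (Var i :: 'a::comm_semiring_1 mpoly)"
proof -
  assume i: "i \<le> n"
  have "\<And>j. Const (if i = j then 1 else 0) * Var j = (if i = j then 1 else 0) * (Var j :: 'a mpoly)"
    by simp
  then show ?thesis using i by (simp add: sig_def sum_delta_mult)
qed

lemma lin_subst_comp:
  "lin_subst n B (lin_subst n A P) = lin_subst n (\<lambda>i m. \<Sum>j\<le>n. A i j * B j m) P"
proof -
  have "(\<lambda>i. subst (sig n B) (sig n A i)) = sig n (\<lambda>i m. \<Sum>j\<le>n. A i j * B j m)"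
  proof
    fix i show "subst (sig n B) (sig n A i) = sig n (\<lambda>i m. \<Sum>j\<le>n. A i j * B j m) i"
    proof (cases "i \<le> n")
      case True
      have "subst (sig n B) (sig n A i) = (\<Sum>j\<le>n. Const (A i j) * (\<Sum>m\<le>n. Const (B j m) * Var m))"
        using True by (simp add: sig_def subst_sum subst_mult)
      also have "\<dots> = (\<Sum>j\<le>n. \<Sum>m\<le>n. Const (A i j) * Const (B j m) * Var m)"
        by (simp add: sum_distrib_left mult.assoc)
      also have "\<dots> = (\<Sum>m\<le>n. \<Sum>j\<le>n. Const (A i j) * Const (B j m) * Var m)"
        by (rule sum.swap)
      also have "\<dots> = (\<Sum>m\<le>n. Const (\<Sum>j\<le>n. A i j * B j m) * Var m)"
        by (simp add: Const_sum Const_mult sum_distrib_right)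
      finally show ?thesis using True by (simp add: sig_def)
    qed (simp add: sig_def)
  qed
  then show ?thesis by (simp add: lin_subst_sig subst_subst)
qed

lemma pd_sig: "i \<le> n \<Longrightarrow> l \<le> n \<Longrightarrow> pd l (sig n A i) = Const (A i l)"
proof -
  assume i: "i \<le> n" and l: "l \<le> n"
  have "pd l (sig n A i) = (\<Sum>j\<le>n. Const (A i j) * (if l = j then 1 else 0))"
    using i by (simp add: sig_def pd_sum pd_Const_mult pd_Var)
  also have "\<dots> = (\<Sum>j\<le>n. (if j = l then Const (A i j) else 0))"
    by (rule sum.cong) auto
  also have "\<dots> = Const (A i l)" using l by simp
  finally show ?thesis .
qed

subsection \<open>Congruences modulo p\<close>

definition pcong :: "int \<Rightarrow> int mpoly \<Rightarrow> int mpoly \<Rightarrow> bool" where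
  "pcong p P Q \<longleftrightarrow> (\<exists>R. P - Q = Const p * R)"

lemma pcong_refl: "pcong p P P"
  unfolding pcong_def by (rule exI[of _ 0]) simp

lemma pcong_sym: "pcong p P Q \<Longrightarrow> pcong p Q P"
  unfolding pcong_def
proof (elim exE)
  fix R1 assume h: "P - Q = Const p * R1"
  have "Q - P = - (P - Q)" by simp
  also have "\<dots> = Const p * (- R1)" by (simp add: h)
  finally show "\<exists>R. Q - P = Const p * R" ..
qed

lemma pcong_trans: "pcong p P Q \<Longrightarrow> pcong p Q R \<Longrightarrow> pcong p P R"
  unfolding pcong_def
proof (elim exE)
  fix R1 R2 assume h1: "P - Q = Const p * R1" and h2: "Q - R = Const p * R2"
  have "P - R = (P - Q) + (Q - R)" by simp
  also have "\<dots> = Const p * (R1 + R2)" by (simp add: h1 h2 distrib_left)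
  finally show "\<exists>R'. P - R = Const p * R'" ..
qed

lemma pcong_add: "pcong p P1 Q1 \<Longrightarrow> pcong p P2 Q2 \<Longrightarrow> pcong p (P1 + P2) (Q1 + Q2)"
  unfolding pcong_def
proof (elim exE)
  fix R1 R2 assume "P1 - Q1 = Const p * R1" "P2 - Q2 = Const p * R2"
  then have "P1 + P2 - (Q1 + Q2) = Const p * (R1 + R2)" by (simp add: algebra_simps)
  then show "\<exists>R. P1 + P2 - (Q1 + Q2) = Const p * R" ..
qed

lemma pcong_mult: "pcong p P1 Q1 \<Longrightarrow> pcong p P2 Q2 \<Longrightarrow> pcong p (P1 * P2) (Q1 * Q2)"
  unfolding pcong_def
proof (elim exE)
  fix R1 R2 assume h1: "P1 - Q1 = Const p * R1" and h2: "P2 - Q2 = Const p * R2"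
  have "P1 * P2 - Q1 * Q2 = P1 * (P2 - Q2) + (P1 - Q1) * Q2" by (simp add: algebra_simps)
  also have "\<dots> = Const p * (P1 * R2 + R1 * Q2)" by (simp add: h1 h2 algebra_simps)
  finally show "\<exists>R. P1 * P2 - Q1 * Q2 = Const p * R" ..
qed

lemma pcong_sum: "(\<And>a. a \<in> A \<Longrightarrow> pcong p (f a) (g a)) \<Longrightarrow> pcong p (sum f A) (sum g A)"
proof (induct A rule: infinite_finite_induct)
  case (insert x F) then show ?case by (simp add: pcong_add)
qed (simp_all add: pcong_refl)

lemma pcong_Const: "p dvd (c - d) \<Longrightarrow> pcong p (Const c) (Const d)"
  unfolding pcong_def
proof -
  assume "p dvd (c - d)"
  then obtain t where "c - d = p * t" by (auto elim: dvdE)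
  then have "Const c - Const d = Const p * Const t" by (simp flip: Const_diff Const_mult)
  then show "\<exists>R. Const c - Const d = Const p * R" ..
qed

lemma pcong_coeffs: "pcong p P Q \<longleftrightarrow> (\<forall>mo. p dvd (lk P mo - lk Q mo))"
proof
  assume "pcong p P Q"
  then obtain R where "P - Q = Const p * R" by (auto simp: pcong_def)
  then have "lk P mo - lk Q mo = p * lk R mo" for mo
    by (metis lookup_Const_mult lookup_minus)
  then show "\<forall>mo. p dvd (lk P mo - lk Q mo)" by simp
next
  assume h: "\<forall>mo. p dvd (lk P mo - lk Q mo)"
  let ?R = "Poly_Mapping.map (\<lambda>c. c div p) (P - Q)"
  have "P - Q = Const p * ?R"
  proof (rule poly_mapping_eqI)
    fix mo
    show "lk (P - Q) mo = lk (Const p * ?R) mo"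
      using h by (simp add: lookup_Const_mult lookup_map0 lookup_minus)
  qed
  then show "pcong p P Q" by (auto simp: pcong_def)
qed

lemma pcong_subst: "pcong p P Q \<Longrightarrow> pcong p (subst \<sigma> P) (subst \<sigma> Q)"
  unfolding pcong_def
proof (elim exE)
  fix R assume "P - Q = Const p * R"
  then have "subst \<sigma> P - subst \<sigma> Q = Const p * subst \<sigma> R"
    by (metis subst_diff subst_mult subst_Const)
  then show "\<exists>R. subst \<sigma> P - subst \<sigma> Q = Const p * R" ..
qed

lemma pcong_pd: "pcong p P Q \<Longrightarrow> pcong p (pd i P) (pd i Q)"
  unfolding pcong_def
proof (elim exE)
  fix R assume "P - Q = Const p * R"
  then have "pd i P - pd i Q = Const p * pd i R"
    by (metis pd_diff pd_Const_mult)
  then show "\<exists>R. pd i P - pd i Q = Const p * R" ..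
qed

lemma pcong_subst_sigma:
  assumes "\<And>i. i \<in> vars P \<Longrightarrow> pcong p (\<sigma> i) (\<tau> i)"
  shows "pcong p (subst \<sigma> P) (subst \<tau> P)"
proof (rule mpoly_induct[of P "vars P"])
  show "vars P \<subseteq> vars P" ..
next
  fix c show "pcong p (subst \<sigma> (Const c)) (subst \<tau> (Const c))" by (simp add: pcong_refl)
next
  fix i assume "i \<in> vars P" then show "pcong p (subst \<sigma> (Var i)) (subst \<tau> (Var i))"
    by (simp add: assms)
next
  fix P1 P2 assume "pcong p (subst \<sigma> P1) (subst \<tau> P1)" "pcong p (subst \<sigma> P2) (subst \<tau> P2)"
  then show "pcong p (subst \<sigma> (P1 + P2)) (subst \<tau> (P1 + P2))"
    and "pcong p (subst \<sigma> (P1 * P2)) (subst \<tau> (P1 * P2))"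
    by (simp_all add: subst_add subst_mult pcong_add pcong_mult)
qed

lemma key_mod:
  fixes F :: "int mpoly" and A B :: "nat \<Rightarrow> nat \<Rightarrow> int" and a :: "nat \<Rightarrow> int"
  assumes F: "vars F \<subseteq> {..n}"
    and AB: "\<forall>i\<le>n. \<forall>j\<le>n. (\<Sum>k\<le>n. A i k * B k j) mod p = (if i = j then 1 else 0) mod p"
    and k0: "k0 \<le> n" "k0 \<notin> vars (reduce p (lin_subst n A F))"
    and Ba: "\<And>i. i \<le> n \<Longrightarrow> (\<Sum>l\<le>n. B i l * a l) = (if i = k0 then dB else 0)"
  shows "p dvd (\<Sum>l\<le>n. a l * lk (pd l F) mo)"
proof -
  define G where "G = lin_subst n A F"
  have vG: "vars G \<subseteq> {..n}" using vars_lin_subst[OF F] G_def by simp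
  have pG: "pcong p (pd k0 G) 0"
    unfolding pcong_coeffs
  proof
    fix mo :: "nat \<Rightarrow>\<^sub>0 nat"
    have kin: "k0 \<in> ks (mo + sg k0 1)" by (simp add: in_keys_iff lookup_add)
    have "p dvd lk G (mo + sg k0 1)"
    proof (rule ccontr)
      assume "\<not> p dvd lk G (mo + sg k0 1)"
      then have "lk (reduce p G) (mo + sg k0 1) \<noteq> 0" by (simp add: lookup_reduce dvd_eq_mod_eq_0)
      then have "mo + sg k0 1 \<in> ks (reduce p G)" by (simp add: in_keys_iff)
      then have "k0 \<in> vars (reduce p G)" using kin unfolding vars_def by blast
      then show False using k0(2) G_def by simp
    qed
    then show "p dvd (lk (pd k0 G) mo - lk 0 mo)" by (simp add: lookup_pd)
  qed
  define C where "C = (\<lambda>i m. \<Sum>j\<le>n. A i j * B j m)"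
  define G' where "G' = lin_subst n B G"
  have G'C: "G' = lin_subst n C F" by (simp add: G'_def G_def C_def lin_subst_comp)
  have FG': "pcong p F G'"
  proof -
    have "pcong p (subst Var F) (subst (sig n C) F)"
    proof (rule pcong_subst_sigma)
      fix i assume "i \<in> vars F"
      then have i: "i \<le> n" using F by auto
      have "pcong p (sig n C i) (sig n (\<lambda>i j. if i = j then 1 else 0) i)"
        unfolding sig_def using i
      proof (simp, intro pcong_sum pcong_mult pcong_refl pcong_Const)
        fix j assume "j \<in> {..n}"
        then have "C i j mod p = (if i = j then 1 else 0) mod p" using AB i by (simp add: C_def)
        then show "p dvd C i j - (if i = j then 1 else 0)" by (simp add: mod_eq_dvd_iff)
      qed
      then show "pcong p (Var i) (sig n C i)" using i by (simp add: sig_id pcong_sym)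
    qed
    then show ?thesis by (simp add: subst_Var_id G'C lin_subst_sig)
  qed
  have chain: "pd l G' = (\<Sum>i\<le>n. subst (sig n B) (pd i G) * Const (B i l))" if l: "l \<le> n" for l
  proof -
    have "pd l G' = (\<Sum>i\<le>n. subst (sig n B) (pd i G) * pd l (sig n B i))"
      unfolding G'_def lin_subst_sig by (rule chain_rule) (use vG in auto)
    also have "\<dots> = (\<Sum>i\<le>n. subst (sig n B) (pd i G) * Const (B i l))"
      using l by (intro sum.cong refl) (simp add: pd_sig)
    finally show ?thesis .
  qed
  let ?X = "\<lambda>i. subst (sig n B) (pd i G)"
  have DaG': "(\<Sum>l\<le>n. Const (a l) * pd l G') = ?X k0 * Const dB"
  proof -
    have "(\<Sum>l\<le>n. Const (a l) * pd l G') = (\<Sum>l\<le>n. \<Sum>i\<le>n. ?X i * Const (B i l * a l))"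
      by (intro sum.cong refl) (simp add: chain sum_distrib_left Const_mult mult_ac)
    also have "\<dots> = (\<Sum>i\<le>n. \<Sum>l\<le>n. ?X i * Const (B i l * a l))"
      by (rule sum.swap)
    also have "\<dots> = (\<Sum>i\<le>n. ?X i * Const (\<Sum>l\<le>n. B i l * a l))"
      by (simp add: Const_sum sum_distrib_left)
    also have "\<dots> = (\<Sum>i\<le>n. ?X i * Const (if i = k0 then dB else 0))"
      using Ba by (intro sum.cong refl) simp
    also have "\<dots> = (\<Sum>i\<le>n. if i = k0 then ?X i * Const dB else 0)"
      by (intro sum.cong refl) simp
    also have "\<dots> = ?X k0 * Const dB" using k0(1) by simp
    finally show ?thesis .
  qed
  have "pcong p (?X k0) (subst (sig n B) 0)" using pG by (rule pcong_subst)
  then have "pcong p (?X k0 * Const dB) (subst (sig n B) 0 * Const dB)" using pcong_refl by (rule pcong_mult)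
  then have c1: "pcong p (\<Sum>l\<le>n. Const (a l) * pd l G') 0" using DaG' by simp
  have c2: "pcong p (\<Sum>l\<le>n. Const (a l) * pd l F) (\<Sum>l\<le>n. Const (a l) * pd l G')"
    by (intro pcong_sum pcong_mult pcong_refl pcong_pd FG')
  have "pcong p (\<Sum>l\<le>n. Const (a l) * pd l F) 0" using c2 c1 by (rule pcong_trans)
  then have "p dvd lk (\<Sum>l\<le>n. Const (a l) * pd l F) mo" unfolding pcong_coeffs by simp
  then show ?thesis by (simp add: lookup_sum lookup_Const_mult)
qed

lemma kernel_order:
  fixes F :: "int mpoly" and w :: "nat \<Rightarrow> int"
  assumes F: "vars F \<subseteq> {..n}" and j: "j \<le> n" "w j \<noteq> 0"
    and ker: "\<And>mo. (\<Sum>i\<le>n. w i * lk (pd i F) mo) = 0"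
  shows "order_field n (mapq F) \<le> n"
proof -
  define v where "v = (\<lambda>i. (of_int (w i) :: rat))"
  define A where "A = (\<lambda>i k. if k = j then v i else if i = k then 1 else (0::rat))"
  define B where "B = (\<lambda>k l. if l = j then (if k = j then 1 / v j else - v k / v j) else if k = l then 1 else (0::rat))"
  have vj: "v j \<noteq> 0" using j by (simp add: v_def)
  have AB: "(\<Sum>k\<le>n. A i k * B k l) = (if i = l then 1 else 0)" if i: "i \<le> n" and l: "l \<le> n" for i l
  proof (cases "l = j")
    case False
    then have "(\<Sum>k\<le>n. A i k * B k l) = (\<Sum>k\<le>n. A i k * (if k = l then 1 else 0))"
      by (intro sum.cong refl) (simp add: B_def)
    also have "\<dots> = A i l" using l by (intro sum_delta_mult') auto
    also have "\<dots> = (if i = l then 1 else 0)" using False by (simp add: A_def)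
    finally show ?thesis .
  next
    case True
    have "(\<Sum>k\<le>n. A i k * B k l) = A i j * B j j + (\<Sum>k\<in>{..n}-{j}. A i k * B k j)"
      using True j by (simp add: sum.remove)
    also have "(\<Sum>k\<in>{..n}-{j}. A i k * B k j) = (\<Sum>k\<in>{..n}-{j}. (if i = k then 1 else 0) * (- v k / v j))"
      by (intro sum.cong refl) (auto simp: A_def B_def)
    also have "\<dots> = (if i \<noteq> j then - v i / v j else 0)"
    proof (cases "i = j")
      case True
      then show ?thesis by (intro trans[OF sum.neutral]) auto
    next
      case False
      then show ?thesis using i by (subst sum_delta_mult) auto
    qed
    finally show ?thesis using True vj by (auto simp: A_def B_def)
  qed
  define H where "H = lin_subst n A (mapq F)"
  have vF: "vars (mapq F) \<subseteq> {..n}" using F by (simp add: vars_mapq)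
  have "pd j H = (\<Sum>i\<le>n. subst (sig n A) (pd i (mapq F)) * pd j (sig n A i))"
    unfolding H_def lin_subst_sig by (rule chain_rule) (use vF in auto)
  also have "\<dots> = (\<Sum>i\<le>n. subst (sig n A) (pd i (mapq F)) * Const (v i))"
    using j by (intro sum.cong refl) (simp add: pd_sig A_def)
  also have "\<dots> = subst (sig n A) (\<Sum>i\<le>n. pd i (mapq F) * Const (v i))"
    by (simp add: subst_sum subst_mult)
  also have "(\<Sum>i\<le>n. pd i (mapq F) * Const (v i)) = 0"
  proof (rule poly_mapping_eqI)
    fix mo
    have "lk (\<Sum>i\<le>n. pd i (mapq F) * Const (v i)) mo = (\<Sum>i\<le>n. v i * lk (pd i (mapq F)) mo)"
      by (simp add: lookup_sum mult.commute[of _ "Const _"] lookup_Const_mult)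
    also have "\<dots> = of_int (\<Sum>i\<le>n. w i * lk (pd i F) mo)"
      by (simp add: v_def lookup_pd lookup_mapq)
    also have "\<dots> = 0" using ker by simp
    finally show "lk (\<Sum>i\<le>n. pd i (mapq F) * Const (v i)) mo = lk 0 mo" by simp
  qed
  finally have "pd j H = 0" by simp
  then have "j \<notin> vars H" by (rule pd_zero_not_var)
  moreover have "vars H \<subseteq> {..n}" using vars_lin_subst[OF vF] H_def by simp
  ultimately have "vars H \<subseteq> {..n} - {j}" by auto
  then have "card (vars H) \<le> n" using card_mono[of "{..n} - {j}" "vars H"] j by simp
  then show ?thesis unfolding order_field_def
    by (intro Least_le exI[of _ A] exI[of _ B] conjI) (use AB H_def in auto)
qed

lemma mat_entry_mult:
  assumes "A \<in> carrier_mat N N" "B \<in> carrier_mat N N" "i < N" "j < N"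
  shows "(A * B) $$ (i,j) = (\<Sum>k<N. A $$ (i,k) * B $$ (k,j))"
  using assms by (simp add: index_mult_mat scalar_prod_def atLeast0LessThan)

lemma det_cong:
  fixes M1 M2 :: "int mat"
  assumes "M1 \<in> carrier_mat N N" "M2 \<in> carrier_mat N N"
    and h: "\<And>i j. i < N \<Longrightarrow> j < N \<Longrightarrow> M1 $$ (i,j) mod p = M2 $$ (i,j) mod p"
  shows "det M1 mod p = det M2 mod p"
proof -
  have pr: "(\<Prod>i = 0..<N. M1 $$ (i, \<pi> i)) mod p = (\<Prod>i = 0..<N. M2 $$ (i, \<pi> i)) mod p"
    if "\<pi> permutes {0..<N}" for \<pi>
  proof -
    have "(\<Prod>i = 0..<N. M1 $$ (i, \<pi> i)) mod p = (\<Prod>i = 0..<N. M1 $$ (i, \<pi> i) mod p) mod p"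
      by (rule mod_prod_eq[symmetric])
    also have "(\<Prod>i = 0..<N. M1 $$ (i, \<pi> i) mod p) = (\<Prod>i = 0..<N. M2 $$ (i, \<pi> i) mod p)"
    proof (rule prod.cong[OF refl])
      fix i assume "i \<in> {0..<N}"
      then have "i < N" "\<pi> i < N" using permutes_in_image[OF that] by auto
      then show "M1 $$ (i, \<pi> i) mod p = M2 $$ (i, \<pi> i) mod p" by (rule h)
    qed
    also have "(\<Prod>i = 0..<N. M2 $$ (i, \<pi> i) mod p) mod p = (\<Prod>i = 0..<N. M2 $$ (i, \<pi> i)) mod p"
      by (rule mod_prod_eq)
    finally show ?thesis .
  qed
  have tm: "(signof \<pi> * (\<Prod>i = 0..<N. M1 $$ (i, \<pi> i))) mod p = (signof \<pi> * (\<Prod>i = 0..<N. M2 $$ (i, \<pi> i))) mod p"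
    if "\<pi> permutes {0..<N}" for \<pi>
  proof -
    have "(signof \<pi> * (\<Prod>i = 0..<N. M1 $$ (i, \<pi> i))) mod p = (signof \<pi> * ((\<Prod>i = 0..<N. M1 $$ (i, \<pi> i)) mod p)) mod p"
      by (rule mod_mult_right_eq[symmetric])
    also have "\<dots> = (signof \<pi> * ((\<Prod>i = 0..<N. M2 $$ (i, \<pi> i)) mod p)) mod p"
      by (simp only: pr[OF that])
    also have "\<dots> = (signof \<pi> * (\<Prod>i = 0..<N. M2 $$ (i, \<pi> i))) mod p"
      by (rule mod_mult_right_eq)
    finally show ?thesis .
  qed
  have "det M1 mod p = (\<Sum>\<pi>\<in>{\<pi>. \<pi> permutes {0..<N}}. signof \<pi> * (\<Prod>i = 0..<N. M1 $$ (i, \<pi> i))) mod p"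
    using assms(1) by (simp only: det_def')
  also have "\<dots> = (\<Sum>\<pi>\<in>{\<pi>. \<pi> permutes {0..<N}}. (signof \<pi> * (\<Prod>i = 0..<N. M1 $$ (i, \<pi> i))) mod p) mod p"
    by (rule mod_sum_eq[symmetric])
  also have "(\<Sum>\<pi>\<in>{\<pi>. \<pi> permutes {0..<N}}. (signof \<pi> * (\<Prod>i = 0..<N. M1 $$ (i, \<pi> i))) mod p)
     = (\<Sum>\<pi>\<in>{\<pi>. \<pi> permutes {0..<N}}. (signof \<pi> * (\<Prod>i = 0..<N. M2 $$ (i, \<pi> i))) mod p)"
    using tm by (intro sum.cong refl) simp
  also have "(\<Sum>\<pi>\<in>{\<pi>. \<pi> permutes {0..<N}}. (signof \<pi> * (\<Prod>i = 0..<N. M2 $$ (i, \<pi> i))) mod p) mod p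
     = (\<Sum>\<pi>\<in>{\<pi>. \<pi> permutes {0..<N}}. signof \<pi> * (\<Prod>i = 0..<N. M2 $$ (i, \<pi> i))) mod p"
    by (rule mod_sum_eq)
  also have "\<dots> = det M2 mod p"
    using assms(2) by (simp only: det_def')
  finally show ?thesis .
qed


definition dset :: "nat \<Rightarrow> int mpoly \<Rightarrow> (nat \<Rightarrow>\<^sub>0 nat) set" where
  "dset n F = (\<Union>l\<le>n. ks (pd l F))"

definition dmat :: "nat \<Rightarrow> int mpoly \<Rightarrow> int mat" where
  "dmat n F = mat (Suc n) (Suc n) (\<lambda>(i,j). \<Sum>mo\<in>dset n F. lk (pd i F) mo * lk (pd j F) mo)"

lemma dmat_carrier: "dmat n F \<in> carrier_mat (Suc n) (Suc n)"
  by (simp add: dmat_def)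

lemma finite_dset: "finite (dset n F)"
  by (simp add: dset_def)

lemma outside_dset: "mo \<notin> dset n F \<Longrightarrow> l \<le> n \<Longrightarrow> lk (pd l F) mo = 0"
  by (auto simp: dset_def in_keys_iff)

lemma dmat_row_sum:
  assumes i: "i \<le> n"
  shows "(\<Sum>j\<le>n. dmat n F $$ (i,j) * w j) = (\<Sum>mo\<in>dset n F. lk (pd i F) mo * (\<Sum>j\<le>n. w j * lk (pd j F) mo))"
proof -
  have "(\<Sum>j\<le>n. dmat n F $$ (i,j) * w j) = (\<Sum>j\<le>n. \<Sum>mo\<in>dset n F. lk (pd i F) mo * (w j * lk (pd j F) mo))"
    using i by (intro sum.cong refl) (simp add: dmat_def sum_distrib_left sum_distrib_right mult_ac)
  also have "\<dots> = (\<Sum>mo\<in>dset n F. \<Sum>j\<le>n. lk (pd i F) mo * (w j * lk (pd j F) mo))"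
    by (rule sum.swap)
  also have "\<dots> = (\<Sum>mo\<in>dset n F. lk (pd i F) mo * (\<Sum>j\<le>n. w j * lk (pd j F) mo))"
    by (simp add: sum_distrib_left)
  finally show ?thesis .
qed

lemma det_dmat_nonzero:
  assumes F: "vars F \<subseteq> {..n}" and ord: "order_field n (mapq F) = Suc n"
  shows "det (dmat n F) \<noteq> 0"
proof
  assume "det (dmat n F) = 0"
  then obtain v where v: "v \<in> carrier_vec (Suc n)" "v \<noteq> 0\<^sub>v (Suc n)" "dmat n F *\<^sub>v v = 0\<^sub>v (Suc n)"
    using det_0_iff_vec_prod_zero[OF dmat_carrier] by blast
  define w where "w = (\<lambda>i. v $ i)"
  define c where "c = (\<lambda>mo. \<Sum>j\<le>n. w j * lk (pd j F) mo)"
  have row0: "(\<Sum>j\<le>n. dmat n F $$ (i,j) * w j) = 0" if i: "i \<le> n" for i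
  proof -
    have "(dmat n F *\<^sub>v v) $ i = 0" using v(3) i by simp
    then show ?thesis using i v(1) dmat_carrier[of n F]
      by (simp add: index_mult_mat_vec scalar_prod_def atLeast0LessThan lessThan_Suc_atMost w_def)
  qed
  have "(\<Sum>mo\<in>dset n F. c mo * c mo) = (\<Sum>mo\<in>dset n F. \<Sum>i\<le>n. w i * (lk (pd i F) mo * c mo))"
    unfolding c_def by (intro sum.cong refl) (simp add: sum_distrib_right mult_ac)
  also have "\<dots> = (\<Sum>i\<le>n. \<Sum>mo\<in>dset n F. w i * (lk (pd i F) mo * c mo))"
    by (rule sum.swap)
  also have "\<dots> = (\<Sum>i\<le>n. w i * (\<Sum>mo\<in>dset n F. lk (pd i F) mo * c mo))"
    by (simp add: sum_distrib_left)
  also have "\<dots> = (\<Sum>i\<le>n. w i * 0)"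
    using row0 dmat_row_sum by (intro sum.cong refl) (simp add: c_def)
  finally have "(\<Sum>mo\<in>dset n F. c mo * c mo) = 0" by simp
  then have c0: "\<forall>mo\<in>dset n F. c mo * c mo = 0"
    using sum_nonneg_eq_0_iff[of "dset n F" "\<lambda>mo. c mo * c mo"] finite_dset[of n F] by simp
  have ker: "(\<Sum>i\<le>n. w i * lk (pd i F) mo) = 0" for mo
  proof (cases "mo \<in> dset n F")
    case True then show ?thesis using c0 by (simp add: c_def)
  next
    case False then show ?thesis by (simp add: outside_dset)
  qed
  obtain j where j: "j < Suc n" "v $ j \<noteq> 0"
  proof (rule ccontr)
    assume "\<not> thesis"
    then have "\<forall>j<Suc n. v $ j = 0" using that by blast
    then have "v = 0\<^sub>v (Suc n)" using v(1) by (intro eq_vecI) auto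
    then show False using v(2) by simp
  qed
  have "order_field n (mapq F) \<le> n"
    using kernel_order[OF F _ _ ker, of j] j by (simp add: w_def)
  then show False using ord by simp
qed

lemma dmat_mod:
  fixes p :: int and a :: "nat \<Rightarrow> int"
  assumes p: "prime p" and nd: "\<not> p dvd det (dmat n F)"
    and ha: "\<And>mo. p dvd (\<Sum>l\<le>n. a l * lk (pd l F) mo)"
    and l: "l \<le> n"
  shows "p dvd a l"
proof -
  let ?Q = "dmat n F" and ?J = "adj_mat (dmat n F)"
  have J: "?J \<in> carrier_mat (Suc n) (Suc n)" using adj_mat(1)[OF dmat_carrier] .
  have e: "(\<Sum>i\<le>n. ?J $$ (l,i) * ?Q $$ (i,j)) = (if l = j then det ?Q else 0)" if j: "j \<le> n" for j
  proof -
    have "(?J * ?Q) $$ (l,j) = (\<Sum>i\<le>n. ?J $$ (l,i) * ?Q $$ (i,j))"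
      using l j J dmat_carrier by (simp add: mat_entry_mult lessThan_Suc_atMost)
    moreover have "(?J * ?Q) $$ (l,j) = (if l = j then det ?Q else 0)"
      using adj_mat(3)[OF dmat_carrier] l j by simp
    ultimately show ?thesis by simp
  qed
  have "det ?Q * a l = (\<Sum>j\<le>n. (if l = j then det ?Q else 0) * a j)"
    using l by (simp add: if_distrib[of "\<lambda>x. x * _"] sum.delta cong: if_cong)
  also have "\<dots> = (\<Sum>j\<le>n. (\<Sum>i\<le>n. ?J $$ (l,i) * ?Q $$ (i,j)) * a j)"
    using e by (intro sum.cong refl) simp
  also have "\<dots> = (\<Sum>j\<le>n. \<Sum>i\<le>n. ?J $$ (l,i) * (?Q $$ (i,j) * a j))"
    by (intro sum.cong refl) (simp add: sum_distrib_left sum_distrib_right mult_ac)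
  also have "\<dots> = (\<Sum>i\<le>n. \<Sum>j\<le>n. ?J $$ (l,i) * (?Q $$ (i,j) * a j))"
    by (rule sum.swap)
  also have "\<dots> = (\<Sum>i\<le>n. ?J $$ (l,i) * (\<Sum>j\<le>n. ?Q $$ (i,j) * a j))"
    by (simp add: sum_distrib_left)
  finally have eq: "det ?Q * a l = (\<Sum>i\<le>n. ?J $$ (l,i) * (\<Sum>j\<le>n. ?Q $$ (i,j) * a j))" .
  have hQ: "p dvd (\<Sum>j\<le>n. ?Q $$ (i,j) * a j)" if "i \<le> n" for i
    using dmat_row_sum[OF that, of F a] ha by (simp add: dvd_sum dvd_mult)
  have "p dvd det ?Q * a l" unfolding eq by (rule dvd_sum, rule dvd_mult, rule hQ, simp)
  then show ?thesis using p nd by (simp add: prime_dvd_mult_iff)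
qed

lemma order_mod_witness:
  "\<exists>A B. (\<forall>i\<le>n. \<forall>j\<le>n. (\<Sum>k\<le>n. A i k * B k j) mod p = (if i = j then 1 else 0) mod p)
      \<and> card (vars (reduce p (lin_subst n A F))) \<le> order_mod p n F"
  unfolding order_mod_def
proof (rule LeastI_ex, intro exI conjI allI impI)
  fix i j :: nat assume "i \<le> n" "j \<le> n"
  then show "(\<Sum>k\<le>n. (if i = k then 1 else 0) * (if k = j then 1 else 0)) mod p = (if i = j then 1 else (0::int)) mod p"
    by (simp only: id_mult)
qed (rule order_refl)

lemma order_field_witness:
  "\<exists>A B. (\<forall>i\<le>n. \<forall>j\<le>n. (\<Sum>k\<le>n. A i k * B k j) = (if i = j then 1 else 0))
      \<and> card (vars (lin_subst n A P)) \<le> order_field n (P :: 'a::field mpoly)"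
  unfolding order_field_def
proof (rule LeastI_ex, intro exI conjI allI impI)
  fix i j :: nat assume "i \<le> n" "j \<le> n"
  then show "(\<Sum>k\<le>n. (if i = k then 1 else 0) * (if k = j then 1 else 0)) = (if i = j then 1 else (0::'a))"
    by (simp only: id_mult)
qed (rule order_refl)

lemma mat_fun_mult:
  assumes "M \<in> carrier_mat (Suc n) (Suc n)" "i \<le> n" "j \<le> n"
  shows "(mat (Suc n) (Suc n) (\<lambda>(i,j). A i j) * M) $$ (i,j) = (\<Sum>k\<le>n. A i k * M $$ (k,j))"
proof -
  have "(mat (Suc n) (Suc n) (\<lambda>(i,j). A i j) * M) $$ (i,j) = (\<Sum>k<Suc n. mat (Suc n) (Suc n) (\<lambda>(i,j). A i j) $$ (i,k) * M $$ (k,j))"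
    using assms by (intro mat_entry_mult) auto
  also have "\<dots> = (\<Sum>k<Suc n. A i k * M $$ (k,j))"
    using assms by (intro sum.cong refl) auto
  finally show ?thesis by (simp add: lessThan_Suc_atMost)
qed

lemma forward:
  fixes F :: "int mpoly"
  assumes F: "vars F \<subseteq> {..n}" and ord: "order_field n (mapq F) = Suc n"
  shows "finite {p :: int. prime p \<and> order_mod p n F \<noteq> n + 1}"
proof -
  let ?D = "det (dmat n F)"
  have D0: "?D \<noteq> 0" by (rule det_dmat_nonzero[OF F ord])
  have "{p :: int. prime p \<and> order_mod p n F \<noteq> n + 1} \<subseteq> {d. d dvd ?D}"
  proof
    fix p assume "p \<in> {p :: int. prime p \<and> order_mod p n F \<noteq> n + 1}"
    then have p: "prime p" and ne: "order_mod p n F \<noteq> n + 1" by auto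
    show "p \<in> {d. d dvd ?D}"
    proof (rule ccontr)
      assume "p \<notin> {d. d dvd ?D}"
      then have nd: "\<not> p dvd ?D" by simp
      have le: "order_mod p n F \<le> n" using order_mod_le[OF F, of p] ne by simp
      obtain A B where AB: "\<forall>i\<le>n. \<forall>j\<le>n. (\<Sum>k\<le>n. A i k * B k j) mod p = (if i = j then 1 else 0) mod p"
        and cd: "card (vars (reduce p (lin_subst n A F))) \<le> order_mod p n F"
        using order_mod_witness by blast
      have sub: "vars (reduce p (lin_subst n A F)) \<subseteq> {..n}"
        using vars_reduce[of p "lin_subst n A F"] vars_lin_subst[OF F, of A] by (rule order_trans)
      obtain k0 where k0: "k0 \<le> n" "k0 \<notin> vars (reduce p (lin_subst n A F))"
        using missing_index[OF sub] cd le by force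
      define Am where "Am = mat (Suc n) (Suc n) (\<lambda>(i,j). A i j)"
      define Bm where "Bm = mat (Suc n) (Suc n) (\<lambda>(i,j). B i j)"
      have Am: "Am \<in> carrier_mat (Suc n) (Suc n)" and Bm: "Bm \<in> carrier_mat (Suc n) (Suc n)"
        by (simp_all add: Am_def Bm_def)
      define a where "a = (\<lambda>l. adj_mat Bm $$ (l, k0))"
      have adjB: "adj_mat Bm \<in> carrier_mat (Suc n) (Suc n)" using adj_mat(1)[OF Bm] .
      have Ba: "(\<Sum>l\<le>n. B i l * a l) = (if i = k0 then det Bm else 0)" if i: "i \<le> n" for i
      proof -
        have "(Bm * adj_mat Bm) $$ (i,k0) = (\<Sum>l\<le>n. B i l * a l)"
          unfolding Bm_def a_def using mat_fun_mult[OF adjB[unfolded Bm_def] i k0(1)] .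
        moreover have "(Bm * adj_mat Bm) $$ (i,k0) = (if i = k0 then det Bm else 0)"
          using adj_mat(2)[OF Bm] i k0(1) by simp
        ultimately show ?thesis by simp
      qed
      have ha: "p dvd (\<Sum>l\<le>n. a l * lk (pd l F) mo)" for mo
        by (rule key_mod[OF F AB k0 Ba])
      have al: "p dvd a l" if "l \<le> n" for l
        by (rule dmat_mod[OF p nd ha that])
      have "det Bm = (\<Sum>l\<le>n. B k0 l * a l)" using Ba[OF k0(1)] by simp
      also have "p dvd \<dots>" using al by (intro dvd_sum dvd_mult) simp
      finally have "p dvd det Am * det Bm" by simp
      then have z: "(det Am * det Bm) mod p = 0" by simp
      have "det Am * det Bm = det (Am * Bm)" using det_mult[OF Am Bm] by simp
      moreover have "det (Am * Bm) mod p = det (1\<^sub>m (Suc n)) mod p"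
      proof (rule det_cong)
        show "Am * Bm \<in> carrier_mat (Suc n) (Suc n)" using Am Bm by simp
        show "1\<^sub>m (Suc n) \<in> carrier_mat (Suc n) (Suc n)" by simp
        fix i j assume "i < Suc n" "j < Suc n"
        then have ij: "i \<le> n" "j \<le> n" by auto
        have "(Am * Bm) $$ (i,j) = (\<Sum>k\<le>n. A i k * Bm $$ (k,j))"
          unfolding Am_def using mat_fun_mult[OF Bm ij] .
        also have "\<dots> = (\<Sum>k\<le>n. A i k * B k j)"
          using ij by (intro sum.cong refl) (simp add: Bm_def)
        finally show "(Am * Bm) $$ (i,j) mod p = 1\<^sub>m (Suc n) $$ (i,j) mod p"
          using AB ij by simp
      qed
      ultimately have "1 mod p = 0" using z by simp
      then have "p dvd 1" by (simp add: dvd_eq_mod_eq_0)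
      then show False using p not_prime_unit by blast
    qed
  qed
  then show ?thesis by (rule finite_subset) (rule finite_divisors_int[OF D0])
qed

lemma common_denom: "finite S \<Longrightarrow> \<exists>D::int. D > 0 \<and> (\<forall>x\<in>S. \<exists>z::int. rat_of_int D * x = rat_of_int z)"
proof (induct S rule: finite_induct)
  case empty show ?case by (intro exI[of _ 1]) auto
next
  case (insert x S)
  then obtain D where D: "D > 0" "\<forall>y\<in>S. \<exists>z. rat_of_int D * y = rat_of_int z" by blast
  obtain a b where x: "quotient_of x = (a, b)" by (cases "quotient_of x")
  then have b: "b > 0" and xab: "x = of_int a / of_int b"
    using quotient_of_denom_pos quotient_of_div by blast+
  have all: "\<forall>y\<in>insert x S. \<exists>z::int. rat_of_int (D*b) * y = rat_of_int z"
  proof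
    fix y assume y: "y \<in> insert x S"
    show "\<exists>z::int. rat_of_int (D*b) * y = rat_of_int z"
    proof (cases "y = x")
      case True then show ?thesis using b xab by (intro exI[of _ "D * a"]) simp
    next
      case False then have "y \<in> S" using y by simp
      then obtain z where "rat_of_int D * y = rat_of_int z" using D by blast
      then have "rat_of_int (D*b) * y = rat_of_int (z * b)" by (simp add: mult_ac)
      then show ?thesis ..
    qed
  qed
  have "D * b > 0" using D b by simp
  then show ?case using all by blast
qed

lemma backward:
  fixes F :: "int mpoly"
  assumes F: "vars F \<subseteq> {..n}" and fin: "finite {p :: int. prime p \<and> order_mod p n F \<noteq> n + 1}"
  shows "order_field n (mapq F) = Suc n"
proof (rule ccontr)
  assume ne: "order_field n (mapq F) \<noteq> Suc n"
  have vF: "vars (mapq F) \<subseteq> {..n}" using F by (simp add: vars_mapq)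
  have le: "order_field n (mapq F) \<le> n" using order_field_le[OF vF] ne by simp
  obtain A B :: "nat \<Rightarrow> nat \<Rightarrow> rat" where AB: "\<forall>i\<le>n. \<forall>j\<le>n. (\<Sum>k\<le>n. A i k * B k j) = (if i = j then 1 else 0)"
    and cd: "card (vars (lin_subst n A (mapq F))) \<le> order_field n (mapq F)"
    using order_field_witness by blast
  define H where "H = lin_subst n A (mapq F)"
  have vH: "vars H \<subseteq> {..n}" using vars_lin_subst[OF vF] H_def by simp
  obtain k0 where k0: "k0 \<le> n" "k0 \<notin> vars H" using missing_index[OF vH] cd le H_def by force
  let ?S = "(\<lambda>(i,j). A i j) ` ({..n}\<times>{..n}) \<union> (\<lambda>(i,j). B i j) ` ({..n}\<times>{..n})"
  obtain D :: int where D: "D > 0" "\<forall>x\<in>?S. \<exists>z::int. rat_of_int D * x = rat_of_int z"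
    using common_denom[of ?S] by auto
  define A' where "A' = (\<lambda>i j. SOME z. rat_of_int D * A i j = rat_of_int z)"
  define B' where "B' = (\<lambda>i j. SOME z. rat_of_int D * B i j = rat_of_int z)"
  have A': "rat_of_int (A' i j) = rat_of_int D * A i j" if "i \<le> n" "j \<le> n" for i j
  proof -
    have "A i j \<in> ?S" using that by (intro UnI1 rev_image_eqI[of "(i,j)"]) auto
    then have "\<exists>z. rat_of_int D * A i j = rat_of_int z" using D(2) by blast
    from someI_ex[OF this] show ?thesis unfolding A'_def by simp
  qed
  have B': "rat_of_int (B' i j) = rat_of_int D * B i j" if "i \<le> n" "j \<le> n" for i j
  proof -
    have "B i j \<in> ?S" using that by (intro UnI2 rev_image_eqI[of "(i,j)"]) auto
    then have "\<exists>z. rat_of_int D * B i j = rat_of_int z" using D(2) by blast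
    from someI_ex[OF this] show ?thesis unfolding B'_def by simp
  qed
  have AB': "(\<Sum>k\<le>n. A' i k * B' k j) = D^2 * (if i = j then 1 else 0)" if ij: "i \<le> n" "j \<le> n" for i j
  proof -
    have "rat_of_int (\<Sum>k\<le>n. A' i k * B' k j) = (\<Sum>k\<le>n. (rat_of_int D * A i k) * (rat_of_int D * B k j))"
      unfolding of_int_sum of_int_mult using ij by (intro sum.cong refl) (simp add: A' B')
    also have "\<dots> = rat_of_int D ^ 2 * (\<Sum>k\<le>n. A i k * B k j)"
      by (simp add: sum_distrib_left power2_eq_square mult_ac)
    also have "\<dots> = rat_of_int (D^2 * (if i = j then 1 else 0))" using AB ij by simp
    finally show ?thesis by (simp only: of_int_eq_iff)
  qed
  define sc where "sc = (\<lambda>j. if j \<le> n then Const (rat_of_int D) * Var j else (Var j :: rat mpoly))"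
  have key: "mapq (lin_subst n A' F) = subst sc H"
  proof -
    have "mapq (lin_subst n A' F) = subst (\<lambda>i. mapq (sig n A' i)) (mapq F)"
      by (simp add: lin_subst_sig mapq_subst)
    also have "(\<lambda>i. mapq (sig n A' i)) = (\<lambda>i. subst sc (sig n A i))"
    proof
      fix i show "mapq (sig n A' i) = subst sc (sig n A i)"
      proof (cases "i \<le> n")
        case True
        have "mapq (sig n A' i) = (\<Sum>j\<le>n. Const (rat_of_int (A' i j)) * Var j)"
          using True by (simp add: sig_def mapq_sum mapq_mult mapq_Const mapq_Var)
        also have "\<dots> = (\<Sum>j\<le>n. Const (A i j) * sc j)"
          using True by (intro sum.cong refl) (simp add: A' Const_mult mult_ac sc_def)
        also have "\<dots> = subst sc (sig n A i)"
          using True by (simp add: sig_def subst_sum subst_mult)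
        finally show ?thesis .
      qed (simp add: sig_def mapq_Var sc_def)
    qed
    finally show ?thesis by (simp add: H_def lin_subst_sig subst_subst)
  qed
  have vsc: "vars (subst sc H) \<subseteq> vars H"
  proof -
    have "vars (subst sc H) \<subseteq> (\<Union>i\<in>vars H. vars (sc i))" by (rule vars_subst)
    also have "\<dots> \<subseteq> vars H"
    proof (rule UN_least)
      fix i assume i: "i \<in> vars H"
      have "vars (sc i) \<subseteq> {i}"
        using vars_Const_mult[of "rat_of_int D" "Var i"] vars_Var[of i] by (auto simp: sc_def)
      then show "vars (sc i) \<subseteq> vars H" using i by auto
    qed
    finally show ?thesis .
  qed
  have good: "order_mod p n F \<noteq> n + 1" if p: "prime p" "p > D" for p
  proof -
    have nd: "\<not> p dvd D"
    proof
      assume "p dvd D"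
      then have "p \<le> D" using D(1) by (rule zdvd_imp_le)
      then show False using p(2) by simp
    qed
    have "coprime p (D^2)" using prime_imp_coprime[OF p(1) nd] by simp
    then have "gcd (D^2) p = 1" by (simp add: coprime_iff_gcd_eq_1 gcd.commute)
    then obtain u v where uv: "u * D^2 + v * p = 1" using bezout_int[of "D^2" p] by auto
    define B'' where "B'' = (\<lambda>i j. u * B' i j)"
    have cond: "\<forall>i\<le>n. \<forall>j\<le>n. (\<Sum>k\<le>n. A' i k * B'' k j) mod p = (if i = j then 1 else 0) mod p"
    proof (intro allI impI)
      fix i j assume ij: "i \<le> n" "j \<le> n"
      have "(\<Sum>k\<le>n. A' i k * B'' k j) = u * (\<Sum>k\<le>n. A' i k * B' k j)"
        by (simp add: B''_def sum_distrib_left mult_ac)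
      also have "\<dots> = (u * D^2) * (if i = j then 1 else 0)" using AB'[OF ij] by simp
      also have "u * D^2 = 1 - v * p" using uv by simp
      finally have eq: "(\<Sum>k\<le>n. A' i k * B'' k j) = (1 - v * p) * (if i = j then 1 else 0)" .
      have "((1 - v * p) * (if i = j then 1 else 0)) mod p = (if i = j then 1 else 0) mod p"
        by (simp add: mod_eq_dvd_iff algebra_simps)
      then show "(\<Sum>k\<le>n. A' i k * B'' k j) mod p = (if i = j then 1 else 0) mod p" using eq by simp
    qed
    have "vars (lin_subst n A' F) = vars (mapq (lin_subst n A' F))" by (simp only: vars_mapq)
    also have "\<dots> = vars (subst sc H)" by (simp only: key)
    finally have "vars (lin_subst n A' F) = vars (subst sc H)" .
    then have "vars (lin_subst n A' F) \<subseteq> vars H" using vsc by simp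
    then have "vars (reduce p (lin_subst n A' F)) \<subseteq> {..n} - {k0}"
      using vars_reduce[of p "lin_subst n A' F"] vH k0(2) by auto
    then have "card (vars (reduce p (lin_subst n A' F))) \<le> card ({..n} - {k0})"
      by (intro card_mono) auto
    also have "\<dots> = n" using k0(1) by simp
    finally have "order_mod p n F \<le> n" unfolding order_mod_def
      by (intro Least_le exI[of _ A'] exI[of _ B''] conjI cond)
    then show ?thesis by simp
  qed
  let ?Bad = "{p :: int. prime p \<and> order_mod p n F \<noteq> n + 1}"
  define M where "M = Max (insert 0 ?Bad)"
  have M: "x \<le> M" if "x \<in> ?Bad" for x
    unfolding M_def using fin that by (intro Max_ge) auto
  obtain q :: nat where q: "prime q" "nat (max M D) < q" using bigger_prime by blast
  have "prime (int q)" using q(1) by (simp add: prime_nat_int_transfer)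
  moreover have "int q > D" "int q > M" using q(2) by auto
  ultimately have "int q \<in> ?Bad" using good by auto
  then have "int q \<le> M" by (rule M)
  then show False using \<open>int q > M\<close> by simp
qed

theorem theorem3p12:
  fixes n :: nat and F :: "int mpoly"
  assumes "is_form F" and "vars F \<subseteq> {..n}"
  shows "order_field n (Poly_Mapping.map (of_int :: int \<Rightarrow> rat) F) = n + 1 \<longleftrightarrow>
         finite {p :: int. prime p \<and> order_mod p n F \<noteq> n + 1}"
  using forward[OF assms(2)] backward[OF assms(2)] by auto

end
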